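(* There exists an SSSCG with weakly monotonic cost functions in which every PSE prescribes the leader a mixed strategy. For instance: $|F|=1$, $R=\{r_1,r_2\}$, $c_{r_1,\ell}(1)=c_{r_2,\ell}(1)=1$, $c_{r_1,\ell}(2)=c_{r_2,\ell}(2)=2$, $c_{r_1,f}(1)=c_{r_1,f}(2)=c_{r_2,f}(1)=c_{r_2,f}(2)=1$; here any pure commitment yields pessimistic leader cost $2$, while $\sigma_\ell(r_1)=\sigma_\ell(r_2)=\tfrac12$ yields $1.5$.
   Context: A symmetric Stackelberg singleton congestion game (SSSCG) consists of a leader $\ell$, a finite set $F$ of followers, a finite set $R$ of resources which every player may select (each player selects exactly one), and cost functions $c_{i,\ell},c_{i,f}:\mathbb N\to\mathbb Q$ ($i\in R$) for the leader and the followers with $c_{i,\ell}(0)=c_{i,f}(0)=0$. The leader commits to a probability distribution $\sigma_\ell$ on $R$ (pure if it puts probability $1$ on one resource). A followers' configuration is $\nu\in\mathbb N^R$ with $\sum_i\nu_i=|F|$. The followers' expected cost of resource $i$ with $x$ followers is $c^{\sigma_\ell}_{i,f}(x)=\sigma_\ell(i)c_{i,f}(x+1)+(1-\sigma_\ell(i))c_{i,f}(x)$; the leader's cost is $c_\ell^{(\sigma_\ell,\nu)}=\sum_{i\in R}\sigma_\ell(i)c_{i,\ell}(\nu_i+1)$. $\nu$ is a Nash equilibrium for $\sigma_\ell$ ($\nu\in E^{\sigma_\ell}$) if for all $i$ with $\nu_i>0$ and all $j\ne i$, $c^{\sigma_\ell}_{i,f}(\nu_i)\le c^{\sigma_\ell}_{j,f}(\nu_j+1)$.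 A PSE is a pair $(\sigma_\ell,\nu)$ such that $\sigma_\ell$ attains the minimum over all leader strategies of $\max_{\nu'\in E^{\sigma_\ell}}c_\ell^{(\sigma_\ell,\nu')}$ and $\nu\in E^{\sigma_\ell}$ attains that maximum. Weakly monotonic: $c_{i,\ell}(x)\le c_{i,\ell}(x+1)$, $c_{i,f}(x)\le c_{i,f}(x+1)$ for all $i,x$. *)

theory Defs
  imports Complex_Main
begin

text \<open>A symmetric Stackelberg singleton congestion game is given by a finite
nonempty resource set R, the number n = |F| of followers (followers are
symmetric, so only their number matters), and cost functions
cl i x (leader) and cf i x (followers) for resource i and load x.\<close>

definition sscg :: "'r set \<Rightarrow> ('r \<Rightarrow> nat \<Rightarrow> rat) \<Rightarrow> ('r \<Rightarrow> nat \<Rightarrow> rat) \<Rightarrow> bool" where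
  "sscg R cl cf \<longleftrightarrow> finite R \<and> R \<noteq> {} \<and> (\<forall>i\<in>R. cl i 0 = 0 \<and> cf i 0 = 0)"

definition weakly_monotonic :: "'r set \<Rightarrow> ('r \<Rightarrow> nat \<Rightarrow> rat) \<Rightarrow> ('r \<Rightarrow> nat \<Rightarrow> rat) \<Rightarrow> bool" where
  "weakly_monotonic R cl cf \<longleftrightarrow> (\<forall>i\<in>R. \<forall>x. cl i x \<le> cl i (Suc x) \<and> cf i x \<le> cf i (Suc x))"

definition leader_strategy :: "'r set \<Rightarrow> ('r \<Rightarrow> real) \<Rightarrow> bool" where
  "leader_strategy R \<sigma> \<longleftrightarrow> (\<forall>i\<in>R. 0 \<le> \<sigma> i) \<and> (\<forall>i. i \<notin> R \<longrightarrow> \<sigma> i = 0) \<and> (\<Sum>i\<in>R. \<sigma> i) = 1"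

definition pure_strategy :: "'r set \<Rightarrow> ('r \<Rightarrow> real) \<Rightarrow> bool" where
  "pure_strategy R \<sigma> \<longleftrightarrow> (\<exists>i\<in>R. \<sigma> i = 1)"

definition config :: "'r set \<Rightarrow> nat \<Rightarrow> ('r \<Rightarrow> nat) \<Rightarrow> bool" where
  "config R n \<nu> \<longleftrightarrow> (\<forall>i. i \<notin> R \<longrightarrow> \<nu> i = 0) \<and> (\<Sum>i\<in>R. \<nu> i) = n"

definition follower_cost :: "('r \<Rightarrow> nat \<Rightarrow> rat) \<Rightarrow> ('r \<Rightarrow> real) \<Rightarrow> 'r \<Rightarrow> nat \<Rightarrow> real" where
  "follower_cost cf \<sigma> i x = \<sigma> i * real_of_rat (cf i (Suc x)) + (1 - \<sigma> i) * real_of_rat (cf i x)"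

definition leader_cost :: "'r set \<Rightarrow> ('r \<Rightarrow> nat \<Rightarrow> rat) \<Rightarrow> ('r \<Rightarrow> real) \<Rightarrow> ('r \<Rightarrow> nat) \<Rightarrow> real" where
  "leader_cost R cl \<sigma> \<nu> = (\<Sum>i\<in>R. \<sigma> i * real_of_rat (cl i (\<nu> i + 1)))"

definition follower_NE :: "'r set \<Rightarrow> nat \<Rightarrow> ('r \<Rightarrow> nat \<Rightarrow> rat) \<Rightarrow> ('r \<Rightarrow> real) \<Rightarrow> ('r \<Rightarrow> nat) \<Rightarrow> bool" where
  "follower_NE R n cf \<sigma> \<nu> \<longleftrightarrow> config R n \<nu> \<and>
     (\<forall>i\<in>R. \<forall>j\<in>R. \<nu> i > 0 \<and> j \<noteq> i \<longrightarrow>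
        follower_cost cf \<sigma> i (\<nu> i) \<le> follower_cost cf \<sigma> j (\<nu> j + 1))"

text \<open>Pessimistic Stackelberg equilibrium: \<nu> attains the maximum leader cost over
E^\<sigma>, and this maximum is minimal among all leader strategies (i.e. for every
other strategy some equilibrium gives the leader at least as high a cost).\<close>
definition PSE :: "'r set \<Rightarrow> nat \<Rightarrow> ('r \<Rightarrow> nat \<Rightarrow> rat) \<Rightarrow> ('r \<Rightarrow> nat \<Rightarrow> rat) \<Rightarrow>
                   ('r \<Rightarrow> real) \<Rightarrow> ('r \<Rightarrow> nat) \<Rightarrow> bool" where
  "PSE R n cl cf \<sigma> \<nu> \<longleftrightarrow> leader_strategy R \<sigma> \<and> follower_NE R n cf \<sigma> \<nu> \<and>
     (\<forall>\<nu>'. follower_NE R n cf \<sigma> \<nu>' \<longrightarrow> leader_cost R cl \<sigma> \<nu>' \<le> leader_cost R cl \<sigma> \<nu>) \<and>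
     (\<forall>\<sigma>'. leader_strategy R \<sigma>' \<longrightarrow>
        (\<exists>\<nu>'. follower_NE R n cf \<sigma>' \<nu>' \<and> leader_cost R cl \<sigma> \<nu> \<le> leader_cost R cl \<sigma>' \<nu>'))"

end

theory Submission
  imports Defs
begin

definition "R0 = {0::nat, 1}"
definition "CL = (\<lambda>(i::nat) (x::nat). (of_nat x :: rat))"
definition "CF = (\<lambda>(i::nat) (x::nat). (if x = 0 then 0 else 1 :: rat))"
definition "ind k = (\<lambda>i::nat. if i = k then 1 else (0::nat))"

lemma config_iff: "config R0 1 \<nu> \<longleftrightarrow> (\<forall>i. i \<notin> R0 \<longrightarrow> \<nu> i = 0) \<and> \<nu> 0 + \<nu> 1 = 1"
  unfolding config_def R0_def by simp

lemma NE_iff: "follower_NE R0 1 CF \<sigma> \<nu> \<longleftrightarrow> config R0 1 \<nu>"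
  by (auto simp: follower_NE_def follower_cost_def CF_def algebra_simps)

lemma lc: "leader_cost R0 CL \<sigma> \<nu> = \<sigma> 0 * (real (\<nu> 0) + 1) + \<sigma> 1 * (real (\<nu> 1) + 1)"
  by (simp add: leader_cost_def R0_def CL_def of_rat_add algebra_simps)

lemma ind_config: "k \<in> R0 \<Longrightarrow> config R0 1 (ind k)"
  unfolding config_def ind_def R0_def by auto

lemma ls: "leader_strategy R0 \<sigma> \<Longrightarrow> \<sigma> 0 \<ge> 0 \<and> \<sigma> 1 \<ge> 0 \<and> \<sigma> 0 + \<sigma> 1 = 1"
  by (simp add: leader_strategy_def R0_def)

definition "half = (\<lambda>i::nat. if i \<in> R0 then 1/2 else (0::real))"

lemma half_ls: "leader_strategy R0 half"
  by (simp add: leader_strategy_def half_def R0_def)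

lemma half_cost: "config R0 1 \<nu> \<Longrightarrow> leader_cost R0 CL half \<nu> = 3/2"
proof -
  assume "config R0 1 \<nu>"
  then have "\<nu> 0 + \<nu> 1 = 1" using config_iff by blast
  then have "real (\<nu> 0) + real (\<nu> 1) = 1" by (metis of_nat_1 of_nat_add)
  then show ?thesis unfolding lc unfolding half_def R0_def by (simp add: field_simps)
qed

lemma PSE_half: "PSE R0 1 CL CF half (ind 0)"
  unfolding PSE_def
proof (intro conjI allI impI)
  show "leader_strategy R0 half" by (rule half_ls)
  show "follower_NE R0 1 CF half (ind 0)" unfolding NE_iff by (rule ind_config) (simp add: R0_def)
  fix \<nu>' assume "follower_NE R0 1 CF half \<nu>'"
  then have "config R0 1 \<nu>'" using NE_iff by blast
  moreover have "config R0 1 (ind 0)" by (rule ind_config) (simp add: R0_def)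
  ultimately show "leader_cost R0 CL half \<nu>' \<le> leader_cost R0 CL half (ind 0)"
    using half_cost[of \<nu>'] half_cost[of "ind 0"] by linarith
next
  fix \<sigma>' assume a: "leader_strategy R0 \<sigma>'"
  note s = ls[OF a]
  show "\<exists>\<nu>'. follower_NE R0 1 CF \<sigma>' \<nu>' \<and> leader_cost R0 CL half (ind 0) \<le> leader_cost R0 CL \<sigma>' \<nu>'"
  proof -
    have h0: "leader_cost R0 CL half (ind 0) = 3/2"
      by (rule half_cost, rule ind_config) (simp add: R0_def)
    have c0: "follower_NE R0 1 CF \<sigma>' (ind 0)" unfolding NE_iff by (rule ind_config) (simp add: R0_def)
    have c1: "follower_NE R0 1 CF \<sigma>' (ind 1)" unfolding NE_iff by (rule ind_config) (simp add: R0_def)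
    have l0: "leader_cost R0 CL \<sigma>' (ind 0) = 2 * \<sigma>' 0 + \<sigma>' 1" unfolding lc by (simp add: ind_def)
    have l1: "leader_cost R0 CL \<sigma>' (ind 1) = \<sigma>' 0 + 2 * \<sigma>' 1" unfolding lc by (simp add: ind_def)
    show ?thesis
    proof (cases "\<sigma>' 0 \<ge> \<sigma>' 1")
      case True
      then show ?thesis using s c0 h0 l0 by (intro exI[of _ "ind 0"]) simp
    next
      case False
      then show ?thesis using s c1 h0 l1 by (intro exI[of _ "ind 1"]) simp
    qed
  qed
qed

lemma not_pure: "PSE R0 1 CL CF \<sigma> \<nu> \<Longrightarrow> \<not> pure_strategy R0 \<sigma>"
proof
  assume p: "PSE R0 1 CL CF \<sigma> \<nu>" and q: "pure_strategy R0 \<sigma>"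
  from p have s: "\<sigma> 0 \<ge> 0 \<and> \<sigma> 1 \<ge> 0 \<and> \<sigma> 0 + \<sigma> 1 = 1" using ls by (simp add: PSE_def)
  from q obtain k where k: "k \<in> R0" "\<sigma> k = 1" by (auto simp: pure_strategy_def)
  have "leader_cost R0 CL \<sigma> (ind k) \<le> leader_cost R0 CL \<sigma> \<nu>"
    using p ind_config[OF k(1)] NE_iff unfolding PSE_def by blast
  moreover have "leader_cost R0 CL \<sigma> (ind k) = 2"
    using k s unfolding lc by (auto simp: R0_def ind_def)
  moreover obtain \<nu>' where n1: "follower_NE R0 1 CF half \<nu>'" and
    n2: "leader_cost R0 CL \<sigma> \<nu> \<le> leader_cost R0 CL half \<nu>'"
    using p half_ls unfolding PSE_def by blast
  moreover have "leader_cost R0 CL half \<nu>' = 3/2"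
    using n1 NE_iff half_cost by blast
  ultimately show False by linarith
qed

theorem mainTheorem15:
  shows "\<exists>(R :: nat set) (n :: nat) cl cf.
           sscg R cl cf \<and> weakly_monotonic R cl cf \<and>
           (\<exists>\<sigma> \<nu>. PSE R n cl cf \<sigma> \<nu>) \<and>
           (\<forall>\<sigma> \<nu>. PSE R n cl cf \<sigma> \<nu> \<longrightarrow> \<not> pure_strategy R \<sigma>)"
  apply (rule exI[of _ R0], rule exI[of _ 1], rule exI[of _ CL], rule exI[of _ CF])
  using PSE_half not_pure
  by (auto simp: sscg_def weakly_monotonic_def R0_def CL_def CF_def)

end
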